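(* Let $n\ge 3$, let $r_1,\ldots,r_n$ be indeterminates over $\mathbb{Q}$, and let $f=\prod_{i=1}^n(x-r_i)=x^n+a_{n-1}x^{n-1}+\cdots+a_0$. Let \[f_1(x,y)=\frac{f(y)-f(x)}{y-x},\qquad f_3(x,y)=\frac{f(y)-2f\left(\frac{x+y}{2}\right)+f(x)}{\frac{(y-x)^2}{2}},\] and $F(x)=\operatorname{res}(f_1,f_3,y)$. Then for any $k,j\in\{2,\ldots,n\}$ with $k\ne j$, the polynomial $r_1-2r_k+r_j$ divides $F(r_1)$ in $\mathbb{Q}[r_1,\ldots,r_n]$.
   Context: $\operatorname{res}(\cdot,\cdot,y)$ is the Sylvester resultant with respect to $y$; $F(r_1)$ is $F$ with $x$ replaced by $r_1$, viewed as a polynomial in $r_1,\ldots,r_n$. *)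

theory Defs
  imports "HOL-Library.Poly_Mapping" "Subresultants.Resultant_Prelim"
begin

text \<open>Multivariate polynomials over the rationals in the indeterminates r_i (i :: nat):
  a polynomial is a finitely supported map from monomials (exponent vectors
  finitely supported nat-valued maps) to rational coefficients.\<close>
type_synonym mpoly = "(nat \<Rightarrow>\<^sub>0 nat) \<Rightarrow>\<^sub>0 rat"

definition mVar :: "nat \<Rightarrow> mpoly" where
  "mVar i = Poly_Mapping.single (Poly_Mapping.single i 1) 1"

definition mConst :: "rat \<Rightarrow> mpoly" where
  "mConst c = Poly_Mapping.single 0 c"

definition fpoly :: "nat \<Rightarrow> mpoly poly" where
  "fpoly n = (\<Prod>i = 1..n. [: - mVar i, 1 :])"

text \<open>Bivariate polynomials in x,y over Q[r]: type mpoly poly poly,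
  outer variable y, inner variable x.\<close>
definition bX :: "mpoly poly poly" where "bX = [: [: 0, 1 :] :]"
definition bY :: "mpoly poly poly" where "bY = [: 0, 1 :]"

definition bConst :: "rat \<Rightarrow> mpoly poly poly" where
  "bConst c = [: [: mConst c :] :]"

definition bsubst :: "mpoly poly \<Rightarrow> mpoly poly poly \<Rightarrow> mpoly poly poly" where
  "bsubst g P = poly (map_poly (\<lambda>c. [: [: c :] :]) g) P"

definition f1 :: "nat \<Rightarrow> mpoly poly poly" where
  "f1 n = (THE q. (bY - bX) * q = bsubst (fpoly n) bY - bsubst (fpoly n) bX)"

definition f3 :: "nat \<Rightarrow> mpoly poly poly" where
  "f3 n = (THE q. (bConst (1/2) * (bY - bX)^2) * q =
      bsubst (fpoly n) bY - 2 * bsubst (fpoly n) (bConst (1/2) * (bX + bY)) + bsubst (fpoly n) bX)"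

definition Fres :: "nat \<Rightarrow> mpoly poly" where
  "Fres n = resultant (f1 n) (f3 n)"

end

theory Submission
  imports Defs "Subresultants.Subresultant"
begin


lemma res_dvd:
  fixes f g :: "'a :: comm_ring_1 poly" and H :: "'a poly \<Rightarrow> 'b :: comm_ring_1"
  assumes hom: "comm_ring_hom H" and deg: "degree f + degree g > 0"
    and f0: "H f = 0" and gd: "D dvd H g"
  shows "D dvd H [: resultant f g :]"
proof -
  interpret comm_ring_hom H by fact
  define N where "N = degree f + degree g"
  define S where "S = subresultant_mat 0 f g"
  have S: "S \<in> carrier_mat N N" unfolding S_def N_def by (rule carrier_matI, simp_all)
  have M: "map_mat H S \<in> carrier_mat N N" using S by auto
  have i: "N - 1 < N" using deg N_def by auto
  have "H [: resultant f g :] = H (det S)"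
    unfolding S_def subresultant_resultant[symmetric] subresultant_def ..
  also have "\<dots> = det (map_mat H S)" by simp
  also have "\<dots> = (\<Sum>j<N. map_mat H S $$ (N - 1,j) * cofactor (map_mat H S) (N - 1) j)"
    by (rule laplace_expansion_row[OF M i])
  finally have eq: "H [: resultant f g :] = \<dots>" .
  show ?thesis unfolding eq
  proof (rule dvd_sum)
    fix j assume "j \<in> {..<N}"
    hence j: "j < N" by auto
    have "map_mat H S $$ (N - 1, j) = H (S $$ (N - 1, j))" using S j i by auto
    also have "S $$ (N - 1, j) = (if j < degree g then monom 1 (degree g - 1 - j) * f
       else monom 1 (degree f - 1 - (j - degree g)) * g)"
    proof -
      have "S $$ (N - 1, j) = (if j < degree g then monom 1 (degree g - 1 - j) * f
        else let jj = j - degree g in monom 1 (degree f - 1 - jj) * g)"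
        unfolding S_def using subresultant_index_mat[of "N - 1" f 0 g j] j i unfolding N_def
        by simp
      thus ?thesis by (simp only: Let_def)
    qed
    finally have "map_mat H S $$ (N - 1, j) = (if j < degree g then H (monom 1 (degree g - 1 - j)) * H f
       else H (monom 1 (degree f - 1 - (j - degree g))) * H g)" by (simp add: hom_mult)
    moreover have "D dvd \<dots>" using f0 gd by auto
    ultimately show "D dvd map_mat H S $$ (N - 1, j) * cofactor (map_mat H S) (N - 1) j" by simp
  qed
qed


lemma poly_diff_dvd:
  fixes g :: "'a :: comm_ring_1 poly"
  shows "(u - v) dvd (poly g u - poly g v)"
proof (induction g)
  case 0 then show ?case by simp
next
  case (pCons c g)
  then obtain q where q: "poly g u - poly g v = (u - v) * q" by (auto elim: dvdE)
  have "poly (pCons c g) u - poly (pCons c g) v = (u - v) * poly g u + v * (poly g u - poly g v)"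
    by (simp add: algebra_simps)
  also have "\<dots> = (u - v) * (poly g u + v * q)" unfolding q by (simp add: algebra_simps)
  finally show ?case by simp
qed

lemma poly_second_diff_dvd:
  fixes g :: "'a :: comm_ring_1 poly"
  shows "d^2 dvd (poly g (m + d) + poly g (m - d) - 2 * poly g m)"
proof (induction g)
  case 0 then show ?case by simp
next
  case (pCons c g)
  then obtain q where q: "poly g (m + d) + poly g (m - d) - 2 * poly g m = d^2 * q" by (auto elim: dvdE)
  obtain r where r: "poly g (m + d) - poly g (m - d) = ((m + d) - (m - d)) * r"
    using poly_diff_dvd[of "m + d" "m - d" g] by (auto elim: dvdE)
  have "poly (pCons c g) (m + d) + poly (pCons c g) (m - d) - 2 * poly (pCons c g) m
    = m * (poly g (m + d) + poly g (m - d) - 2 * poly g m) + d * (poly g (m + d) - poly g (m - d))"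
    by (simp add: algebra_simps)
  also have "\<dots> = d^2 * (m * q + 2 * r)" unfolding q r by (simp add: algebra_simps power2_eq_square)
  finally show ?case by simp
qed

lemma mConst_add: "mConst a + mConst b = mConst (a + b)"
  unfolding mConst_def by (simp only: single_add)
lemma mConst_1: "mConst 1 = 1" unfolding mConst_def by (rule single_one)
lemma cc_add: "[:[:a:]:] + [:[:b:]:] = [:[:a + b:]:]" by simp
lemma two_halfB: "2 * bConst (1/2) = 1"
proof -
  have "2 * bConst (1/2) = bConst (1/2) + bConst (1/2)" by (rule mult_2)
  also have "\<dots> = [: [: mConst (1/2) + mConst (1/2) :] :]" unfolding bConst_def by (rule cc_add)
  also have "\<dots> = [: [: mConst 1 :] :]" unfolding mConst_add by simp
  also have "\<dots> = 1" unfolding mConst_1 by (simp only: one_pCons)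
  finally show ?thesis .
qed
lemma mConst_mult: "mConst a * mConst b = mConst (a * b)"
  unfolding mConst_def mult_single by simp
lemma mConst_nz: assumes "c \<noteq> 0" shows "mConst c \<noteq> 0"
proof
  assume "mConst c = 0"
  hence "Poly_Mapping.lookup (mConst c) 0 = Poly_Mapping.lookup 0 0" by simp
  thus False unfolding mConst_def lookup_single_eq lookup_zero using assms by simp
qed
lemma two_half: "2 * mConst (1/2) = 1"
proof -
  have "2 * mConst (1/2) = mConst (1/2) + mConst (1/2)" by (rule mult_2)
  also have "\<dots> = mConst 1" unfolding mConst_add by simp
  finally show ?thesis unfolding mConst_1 .
qed

lemma mVar_diff_nz: "i \<noteq> l \<Longrightarrow> mVar i - mVar l \<noteq> 0"
proof
  assume il: "i \<noteq> l" and "mVar i - mVar l = 0"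
  hence "mVar i = mVar l" by simp
  hence "Poly_Mapping.lookup (mVar i) (Poly_Mapping.single i 1) = Poly_Mapping.lookup (mVar l) (Poly_Mapping.single i 1)" by simp
  moreover have "Poly_Mapping.single l (1::nat) \<noteq> Poly_Mapping.single i 1"
    using il by (metis lookup_single_eq lookup_single_not_eq one_neq_zero)
  moreover have "Poly_Mapping.lookup (mVar i) (Poly_Mapping.single i 1) = 1"
    unfolding mVar_def by (rule lookup_single_eq)
  moreover have "Poly_Mapping.lookup (mVar l) (Poly_Mapping.single i 1) = 0"
    unfolding mVar_def by (rule lookup_single_not_eq) fact
  ultimately show False by simp
qed

definition ev :: "mpoly \<Rightarrow> mpoly \<Rightarrow> mpoly poly poly \<Rightarrow> mpoly" where
  "ev a b P = poly (poly P [:b:]) a"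

lemma ev_add: "ev a b (P + Q) = ev a b P + ev a b Q" unfolding ev_def by simp
lemma ev_mult: "ev a b (P * Q) = ev a b P * ev a b Q" unfolding ev_def by simp
lemma ev_diff: "ev a b (P - Q) = ev a b P - ev a b Q" unfolding ev_def by simp
lemma ev_one: "ev a b 1 = 1" unfolding ev_def by simp
lemma ev_zero: "ev a b 0 = 0" unfolding ev_def by simp
lemma ev_pow: "ev a b (P ^ k) = ev a b P ^ k" by (induction k) (simp_all add: ev_one ev_mult)
lemma ev_X: "ev a b bX = a" unfolding ev_def bX_def by simp
lemma ev_Y: "ev a b bY = b" unfolding ev_def bY_def by simp
lemma ev_C: "ev a b [:[:x:]:] = x" unfolding ev_def by simp
lemma ev_bConst: "ev a b (bConst c) = mConst c" unfolding bConst_def by (rule ev_C)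
lemma ev_2: "ev a b 2 = 2"
proof -
  have "ev a b 2 = ev a b (1 + 1)" by simp
  also have "\<dots> = 2" by (simp only: ev_add ev_one) simp
  finally show ?thesis .
qed
lemmas ev_simps = ev_add ev_mult ev_diff ev_one ev_zero ev_pow ev_X ev_Y ev_C ev_bConst ev_2

lemma ev_hom: "comm_ring_hom (ev a b)"
  by (unfold_locales) (simp_all add: ev_simps)

lemma ev_bsubst: "ev a b (bsubst g P) = poly g (ev a b P)"
proof (induction g)
  case 0 then show ?case by (simp add: bsubst_def ev_def)
next
  case (pCons c g)
  have "bsubst (pCons c g) P = [:[:c:]:] + P * bsubst g P"
  proof -
    have m: "map_poly (\<lambda>c. [:[:c:]:]) (pCons c g) = pCons [:[:c:]:] (map_poly (\<lambda>c. [:[:c:]:]) g)"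
      using pCons(1) by (rule map_poly_pCons)
    show ?thesis by (simp only: bsubst_def m poly_pCons)
  qed
  then show ?case using pCons(2) by (simp add: ev_simps)
qed

lemma lin_root: "poly [:- x, 1:] x = (0::'a::comm_ring_1)" by simp

lemma fpoly_root: assumes "i \<in> {1..n}" shows "poly (fpoly n) (mVar i) = 0"
  unfolding fpoly_def poly_prod
proof (rule prod_zero)
  show "\<exists>a\<in>{1..n}. poly [:- mVar a, 1:] (mVar i) = 0"
    by (rule bexI[of _ i], rule lin_root, fact)
qed (rule finite_atLeastAtMost)

lemma THE_quot:
  fixes c r :: "'a :: idom"
  assumes "c \<noteq> 0" "c dvd r"
  shows "c * (THE q. c * q = r) = r"
proof -
  from assms(2) obtain q where q: "r = c * q" by (auto elim: dvdE)
  have "\<exists>!q. c * q = r"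
  proof
    show "c * q = r" using q by simp
    fix q' assume "c * q' = r"
    thus "q' = q" using q assms(1) by simp
  qed
  thus ?thesis by (rule theI')
qed

lemma bsubst_poly: "bsubst g P = poly (map_poly (\<lambda>c. [:[:c:]:]) g) P"
  unfolding bsubst_def ..

lemma bYX_nz: "bY - bX \<noteq> 0"
proof -
  have "coeff (bY - bX) 1 = 1" by (simp add: bY_def bX_def)
  thus ?thesis by auto
qed

lemma half_nz: "bConst (1/2) \<noteq> 0"
  using two_halfB by auto

lemma f1_spec: "(bY - bX) * f1 n = bsubst (fpoly n) bY - bsubst (fpoly n) bX"
  unfolding f1_def
  by (rule THE_quot[OF bYX_nz], unfold bsubst_poly, rule poly_diff_dvd)

lemma f3_spec: "(bConst (1/2) * (bY - bX)^2) * f3 n =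
      bsubst (fpoly n) bY - 2 * bsubst (fpoly n) (bConst (1/2) * (bX + bY)) + bsubst (fpoly n) bX"
  unfolding f3_def
proof (rule THE_quot)
  show "bConst (1/2) * (bY - bX)^2 \<noteq> 0" using half_nz bYX_nz by simp
  define h where "h = bConst (1/2)"
  define G where "G = map_poly (\<lambda>c. [:[:c:]:]) (fpoly n)"
  define m where "m = h * (bX + bY)"
  define d where "d = h * (bY - bX)"
  have h2: "2 * h = 1" unfolding h_def by (rule two_halfB)
  have md1: "m + d = bY"
  proof -
    have "m + d = (2 * h) * bY" unfolding m_def d_def by (simp add: algebra_simps)
    thus ?thesis unfolding h2 by simp
  qed
  have md2: "m - d = bX"
  proof -
    have "m - d = (2 * h) * bX" unfolding m_def d_def by (simp add: algebra_simps)
    thus ?thesis unfolding h2 by simp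
  qed
  obtain q where q: "poly G (m + d) + poly G (m - d) - 2 * poly G m = d^2 * q"
    using poly_second_diff_dvd[of d G m] by (auto elim: dvdE)
  have "bsubst (fpoly n) bY - 2 * bsubst (fpoly n) (bConst (1/2) * (bX + bY)) + bsubst (fpoly n) bX
    = poly G (m + d) + poly G (m - d) - 2 * poly G m"
    by (simp only: md1 md2, simp add: bsubst_poly G_def m_def h_def)
  also have "\<dots> = d^2 * q" by (rule q)
  also have "\<dots> = (bConst (1/2) * (bY - bX)^2) * (h * q)"
    unfolding d_def h_def by (simp add: power2_eq_square algebra_simps)
  finally show "bConst (1/2) * (bY - bX)^2 dvd
      bsubst (fpoly n) bY - 2 * bsubst (fpoly n) (bConst (1/2) * (bX + bY)) + bsubst (fpoly n) bX"
    by simp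
qed
lemma bsubst_pCons: "c \<noteq> 0 \<or> g \<noteq> 0 \<Longrightarrow> bsubst (pCons c g) P = [:[:c:]:] + P * bsubst g P"
proof -
  assume cg: "c \<noteq> 0 \<or> g \<noteq> 0"
  have m: "map_poly (\<lambda>c. [:[:c:]:]) (pCons c g) = pCons [:[:c:]:] (map_poly (\<lambda>c. [:[:c:]:]) g)"
    using cg by (rule map_poly_pCons)
  show ?thesis by (simp only: bsubst_def m poly_pCons)
qed

lemma bsubst_Y: "bsubst g bY = map_poly (\<lambda>c. [:c:]) g"
proof (induction g)
  case 0 then show ?case by (simp add: bsubst_def)
next
  case (pCons c g)
  have "bsubst (pCons c g) bY = [:[:c:]:] + bY * map_poly (\<lambda>c. [:c:]) g"
    using bsubst_pCons[OF pCons(1)] pCons(2) by simp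
  also have "\<dots> = pCons [:c:] (map_poly (\<lambda>c. [:c:]) g)" by (simp add: bY_def)
  also have "\<dots> = map_poly (\<lambda>c. [:c:]) (pCons c g)" using pCons(1) by (rule map_poly_pCons[symmetric])
  finally show ?case .
qed

lemma bsubst_X: "\<exists>z. bsubst g bX = [:z:]"
proof (induction g)
  case 0 then show ?case by (simp add: bsubst_def)
next
  case (pCons c g)
  then obtain z where z: "bsubst g bX = [:z:]" by auto
  have "bsubst (pCons c g) bX = [:[:c:] + [:0,1:] * z:]"
    using bsubst_pCons[OF pCons(1)] z by (simp add: bX_def)
  thus ?case by blast
qed

lemma degree_fpoly: "degree (fpoly n) = n"
proof -
  have "degree (fpoly n) = (\<Sum>i\<in>{1..n}. degree [:- mVar i, 1:])"
    unfolding fpoly_def by (rule degree_prod_sum_eq) simp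
  also have "\<dots> = n" by simp
  finally show ?thesis .
qed

lemma degree_f1: assumes "n \<ge> 1" shows "degree (f1 n) = n - 1"
proof -
  obtain z where z: "bsubst (fpoly n) bX = [:z:]" using bsubst_X by blast
  have dY: "degree (bsubst (fpoly n) bY) = n"
  proof -
    have "degree (map_poly (\<lambda>c. [:c:]) (fpoly n)) = degree (fpoly n)" by (rule degree_map_poly) simp
    thus ?thesis unfolding bsubst_Y degree_fpoly .
  qed
  have "degree (bsubst (fpoly n) bY - bsubst (fpoly n) bX) = degree (bsubst (fpoly n) bY + - [:z:])"
    unfolding z by (simp only: diff_conv_add_uminus)
  also have "\<dots> = n" using dY assms by (subst degree_add_eq_left) auto
  finally have d: "degree ((bY - bX) * f1 n) = n" unfolding f1_spec .
  have "f1 n \<noteq> 0" using d assms by (auto)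
  moreover have "degree (bY - bX) = 1" by (simp add: bY_def bX_def)
  ultimately have "degree ((bY - bX) * f1 n) = 1 + degree (f1 n)"
    using bYX_nz by (simp add: degree_mult_eq)
  thus ?thesis using d by simp
qed
lemma lin_eval: "poly [:- x, 1:] y = y - (x::'a::comm_ring_1)" by simp

lemma key_identity:
  fixes a b c h R :: mpoly
  assumes h2: "2 * h = 1"
  shows "- 2 * ((h * (a + b) - a) * ((h * (a + b) - b) * ((h * (a + b) - c) * R)))
    = (h * (b - a)^2) * ((a - 2 * c + b) * (2 * h * h * R))"
proof -
  have 1: "h * (a + b) - a = h * (b - a)"
  proof -
    have "h * (a + b) - a = h * (b - a) + (2 * h - 1) * a" by (simp add: algebra_simps)
    thus ?thesis using h2 by simp
  qed
  have 2: "h * (a + b) - b = - (h * (b - a))"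
  proof -
    have "h * (a + b) - b = - (h * (b - a)) + (2 * h - 1) * b" by (simp add: algebra_simps)
    thus ?thesis using h2 by simp
  qed
  have 3: "h * (a + b) - c = h * (a - 2 * c + b)"
  proof -
    have "h * (a + b) - c = h * (a - 2 * c + b) + (2 * h - 1) * c" by (simp add: algebra_simps)
    thus ?thesis using h2 by simp
  qed
  show ?thesis unfolding 1 2 3 by (simp add: algebra_simps power2_eq_square)
qed

theorem lemma4:
  fixes n k j :: nat
  assumes "n \<ge> 3"
    and "k \<in> {2..n}" and "j \<in> {2..n}" and "k \<noteq> j"
  shows "(mVar 1 - 2 * mVar k + mVar j) dvd poly (Fres n) (mVar 1)"
proof -
  define a where "a = mVar 1"
  define b where "b = mVar j"
  define c where "c = mVar k"
  define h where "h = mConst (1/2)"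
  define f where "f = fpoly n"
  define D where "D = a - 2 * c + b"
  have h2: "2 * h = 1" unfolding h_def by (rule two_half)
  have hnz: "h \<noteq> 0" using h2 by auto
  have ba: "b - a \<noteq> 0" unfolding a_def b_def using assms(3) by (intro mVar_diff_nz) auto
  have fa: "poly f a = 0" unfolding f_def a_def using assms(1) by (intro fpoly_root) auto
  have fb: "poly f b = 0" unfolding f_def b_def using assms(3) by (intro fpoly_root) auto
  have "ev a b ((bY - bX) * f1 n) = (b - a) * ev a b (f1 n)" by (simp add: ev_simps)
  also have "ev a b ((bY - bX) * f1 n) = 0" unfolding f1_spec ev_diff ev_bsubst ev_X ev_Y
    using fa fb f_def by simp
  finally have e1: "ev a b (f1 n) = 0" using ba by simp
  define m where "m = h * (a + b)"
  define A where "A = {1..n} - {1} - {j} - {k}"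
  define R where "R = (\<Prod>i\<in>A. m - mVar i)"
  have fm: "poly f m = (m - a) * ((m - b) * ((m - c) * R))"
  proof -
    have "poly f m = (\<Prod>i\<in>{1..n}. m - mVar i)" unfolding f_def fpoly_def poly_prod lin_eval ..
    also have "\<dots> = (m - mVar 1) * (\<Prod>i\<in>{1..n} - {1}. m - mVar i)"
      by (rule prod.remove) (use assms in auto)
    also have "(\<Prod>i\<in>{1..n} - {1}. m - mVar i) = (m - mVar j) * (\<Prod>i\<in>{1..n} - {1} - {j}. m - mVar i)"
      by (rule prod.remove) (use assms in auto)
    also have "(\<Prod>i\<in>{1..n} - {1} - {j}. m - mVar i) = (m - mVar k) * R"
      unfolding R_def A_def by (rule prod.remove) (use assms in auto)
    finally show ?thesis unfolding a_def b_def c_def .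
  qed
  have "ev a b ((bConst (1/2) * (bY - bX)^2) * f3 n) = (h * (b - a)^2) * ev a b (f3 n)"
    unfolding h_def by (simp add: ev_simps)
  also have "ev a b ((bConst (1/2) * (bY - bX)^2) * f3 n) = - 2 * ((m - a) * ((m - b) * ((m - c) * R)))"
    unfolding fm[symmetric] f3_spec ev_add ev_diff ev_mult ev_bsubst ev_X ev_Y ev_2 ev_bConst
    using fa fb unfolding f_def m_def h_def by (simp add: add.commute)
  also have "\<dots> = (h * (b - a)^2) * (D * (2 * h * h * R))"
    unfolding m_def D_def by (rule key_identity[OF h2])
  finally have "(h * (b - a)^2) * ev a b (f3 n) = (h * (b - a)^2) * (D * (2 * h * h * R))" ..
  hence e3: "ev a b (f3 n) = D * (2 * h * h * R)" using hnz ba by simp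
  have deg: "degree (f1 n) + degree (f3 n) > 0" using degree_f1[of n] assms(1) by simp
  have "D dvd ev a b [: resultant (f1 n) (f3 n) :]"
    by (rule res_dvd[OF ev_hom deg e1]) (simp add: e3)
  moreover have "ev a b [: resultant (f1 n) (f3 n) :] = poly (Fres n) a"
    unfolding Fres_def ev_def by simp
  ultimately show ?thesis unfolding D_def a_def b_def c_def by simp
qed

end
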